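(* Let $\mathbf{X}\in\mathbb{R}^{M\times N_x}$ and $\mathbf{Y}\in\mathbb{R}^{M\times N_y}$ (with $N_x,N_y$ possibly different), and let $\mathbf{K}_X=\mathbf{C}\mathbf{X}\mathbf{X}^\top\mathbf{C}$, $\mathbf{K}_Y=\mathbf{C}\mathbf{Y}\mathbf{Y}^\top\mathbf{C}$. Then $$\mathcal{B}(\mathbf{K}_X,\mathbf{K}_Y)=\mathcal{P}(\mathbf{X},\mathbf{Y}),$$ and, if $\mathbf{C}\mathbf{X}\neq0$ and $\mathbf{C}\mathbf{Y}\neq0$, $$\mathrm{NBS}(\mathbf{K}_X,\mathbf{K}_Y)=\cos\theta^*(\mathbf{X},\mathbf{Y}).$$
   Context: $\mathbf{C}=\mathbf{I}-\tfrac1M\mathbf{1}\mathbf{1}^\top$ is the $M\times M$ centering matrix. $\mathbf{\Sigma}_X=\mathbf{X}^\top\mathbf{C}\mathbf{X}$, $\mathbf{\Sigma}_Y=\mathbf{Y}^\top\mathbf{C}\mathbf{Y}$, $\mathbf{\Sigma}_{XY}=\mathbf{X}^\top\mathbf{C}\mathbf{Y}$; $\Vert\cdot\Vert_*$ is the nuclear norm. The (generalized) Procrustes distance is $\mathcal{P}(\mathbf{X},\mathbf{Y})=\sqrt{\operatorname{Tr}[\mathbf{\Sigma}_X]+\operatorname{Tr}[\mathbf{\Sigma}_Y]-2\Vert\mathbf{\Sigma}_{XY}\Vert_*}$ and the (generalized) Riemannian shape distance is $\theta^*(\mathbf{X},\mathbf{Y})=\arccos\big(\Vert\mathbf{\Sigma}_{XY}\Vert_*/\sqrt{\operatorname{Tr}[\mathbf{\Sigma}_X]\operatorname{Tr}[\mathbf{\Sigma}_Y]}\big)$.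 For PSD $\mathbf{A}$, $\mathbf{A}^{1/2}$ is its unique PSD square root; the fidelity is $\mathcal{F}(\mathbf{A},\mathbf{B})=\operatorname{Tr}[(\mathbf{A}^{1/2}\mathbf{B}\mathbf{A}^{1/2})^{1/2}]$; the Bures distance is $\mathcal{B}(\mathbf{A},\mathbf{B})=\sqrt{\operatorname{Tr}\mathbf{A}+\operatorname{Tr}\mathbf{B}-2\mathcal{F}(\mathbf{A},\mathbf{B})}$; the normalized Bures similarity is $\mathrm{NBS}(\mathbf{A},\mathbf{B})=\mathcal{F}(\mathbf{A},\mathbf{B})/\sqrt{\operatorname{Tr}\mathbf{A}\operatorname{Tr}\mathbf{B}}$. *)

theory Defs
  imports "HOL-Analysis.Analysis"
begin

definition centering :: "real^'m^'m" where
  "centering = (\<chi> i j. (if i = j then 1 else 0) - 1 / real CARD('m))"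

definition psd :: "real^'n^'n \<Rightarrow> bool" where
  "psd A \<longleftrightarrow> transpose A = A \<and> (\<forall>x. 0 \<le> x \<bullet> (A *v x))"

definition msqrt :: "real^'n^'n \<Rightarrow> real^'n^'n" where
  "msqrt A = (THE B. psd B \<and> B ** B = A)"

text \<open>Nuclear norm (sum of singular values) = Tr[(A^T A)^(1/2)].\<close>
definition nuclear_norm :: "real^'n^'m \<Rightarrow> real" where
  "nuclear_norm A = trace (msqrt (transpose A ** A))"

definition SigmaX :: "real^'n^'m \<Rightarrow> real^'n^'n" where
  "SigmaX X = transpose X ** centering ** X"

definition SigmaXY :: "real^'n^'m \<Rightarrow> real^'k^'m \<Rightarrow> real^'k^'n" where
  "SigmaXY X Y = transpose X ** centering ** Y"

definition procrustes :: "real^'n^'m \<Rightarrow> real^'k^'m \<Rightarrow> real" where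
  "procrustes X Y = sqrt (trace (SigmaX X) + trace (SigmaX Y) - 2 * nuclear_norm (SigmaXY X Y))"

definition shape_dist :: "real^'n^'m \<Rightarrow> real^'k^'m \<Rightarrow> real" where
  "shape_dist X Y = arccos (nuclear_norm (SigmaXY X Y) / sqrt (trace (SigmaX X) * trace (SigmaX Y)))"

definition fidelity :: "real^'n^'n \<Rightarrow> real^'n^'n \<Rightarrow> real" where
  "fidelity A B = trace (msqrt (msqrt A ** B ** msqrt A))"

definition bures :: "real^'n^'n \<Rightarrow> real^'n^'n \<Rightarrow> real" where
  "bures A B = sqrt (trace A + trace B - 2 * fidelity A B)"

definition NBS :: "real^'n^'n \<Rightarrow> real^'n^'n \<Rightarrow> real" where
  "NBS A B = fidelity A B / sqrt (trace A * trace B)"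

end

theory Submission
  imports Defs
begin

lemma inner_mat_transpose: "(x::real^'m) \<bullet> (A *v y) = (transpose A *v x) \<bullet> (y::real^'n)"
  by (metis dot_lmul_matrix transpose_matrix_vector)

lemma quad_zero:
  fixes a b :: real
  assumes "b \<ge> 0" "\<And>t. 0 \<le> 2*t*a + t^2*b"
  shows "a = 0"
proof -
  define t where "t = -a/(b+1)"
  have "b + 1 \<noteq> 0" using assms(1) by simp
  hence a_eq: "a = -(t*(b+1))" by (simp add: t_def)
  have h: "0 \<le> 2*t*a + t^2*b" by (rule assms(2))
  have e: "(b+1)^2 * (2*t*a + t^2*b) = -(a^2*(b+2))"
    by (simp add: a_eq power2_eq_square algebra_simps)
  have "0 \<le> (b+1)^2 * (2*t*a + t^2*b)" using h by simp
  hence "a^2*(b+2) \<le> 0" using e by linarith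
  moreover have "b + 2 > 0" using assms(1) by simp
  ultimately have "a^2 \<le> 0" by (simp add: mult_le_0_iff)
  thus ?thesis by simp
qed

lemma spectral_sub:
  fixes A :: "real^'n^'n"
  assumes sym: "transpose A = A"
  shows "subspace S \<Longrightarrow> (\<forall>x\<in>S. A *v x \<in> S) \<Longrightarrow>
    \<exists>B. B \<subseteq> S \<and> pairwise orthogonal B \<and> (\<forall>b\<in>B. norm b = 1) \<and> span B = S \<and>
        (\<forall>b\<in>B. \<exists>l. A *v b = l *\<^sub>R b)"
proof (induction "dim S" arbitrary: S rule: less_induct)
  case (less S)
  have symI: "\<And>x y. x \<bullet> (A *v y) = (A *v x) \<bullet> y"
    using inner_mat_transpose sym by metis
  show ?case
  proof (cases "S = {0}")
    case True
    then show ?thesis by (intro exI[of _ "{}"]) auto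
  next
    case False
    then obtain z where z: "z \<in> S" "z \<noteq> 0" using less.prems subspace_0 by blast
    define K where "K = S \<inter> sphere 0 1"
    have "z /\<^sub>R norm z \<in> K" using z less.prems by (auto simp: K_def subspace_scale)
    hence Kne: "K \<noteq> {}" by auto
    have "closed S" using less.prems closed_subspace by blast
    hence cK: "compact K" unfolding K_def by (intro closed_Int_compact) auto
    have "continuous_on K (\<lambda>x. x \<bullet> (A *v x))"
      by (intro continuous_intros)
    then obtain u where u: "u \<in> K" "\<And>y. y \<in> K \<Longrightarrow> y \<bullet> (A *v y) \<le> u \<bullet> (A *v u)"
      using continuous_attains_sup[OF cK Kne] by blast
    define \<mu> where "\<mu> = u \<bullet> (A *v u)"
    have uS: "u \<in> S" and nu: "norm u = 1" using u(1) by (auto simp: K_def)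
    have uu: "u \<bullet> u = 1" using nu by (simp add: norm_eq_1)
    define g where "g x = \<mu> *\<^sub>R x - A *v x" for x
    have gS: "g x \<in> S" if "x \<in> S" for x
      using that less.prems by (auto simp: g_def intro: subspace_diff subspace_scale)
    have Qpos: "0 \<le> v \<bullet> g v" if "v \<in> S" for v
    proof (cases "v = 0")
      case True then show ?thesis by (simp add: g_def)
    next
      case False
      have "v /\<^sub>R norm v \<in> K" using that False less.prems by (auto simp: K_def subspace_scale)
      hence "(v /\<^sub>R norm v) \<bullet> (A *v (v /\<^sub>R norm v)) \<le> \<mu>" using u(2) \<mu>_def by blast
      hence "(v \<bullet> (A *v v)) / (norm v)^2 \<le> \<mu>"
        by (simp add: matrix_vector_mult_scaleR power2_eq_square divide_inverse mult_ac)
      hence "v \<bullet> (A *v v) \<le> \<mu> * (norm v)^2" using False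
        by (simp add: divide_le_eq)
      thus ?thesis by (simp add: g_def inner_diff_right power2_norm_eq_inner)
    qed
    have Qu: "u \<bullet> g u = 0" by (simp add: g_def inner_diff_right uu \<mu>_def)
    have glin: "g (x + t *\<^sub>R y) = g x + t *\<^sub>R g y" for x y t
      by (simp add: g_def matrix_vector_right_distrib matrix_vector_mult_scaleR algebra_simps scaleR_right_diff_distrib)
    have gsym: "x \<bullet> g y = g x \<bullet> y" for x y
      by (simp add: g_def inner_diff_right inner_diff_left symI)
    have orth: "v \<bullet> g u = 0" if "v \<in> S" for v
    proof (rule quad_zero[of "v \<bullet> g v"])
      show "0 \<le> v \<bullet> g v" using Qpos that .
      fix t
      have "u + t *\<^sub>R v \<in> S" using that uS less.prems by (auto intro: subspace_add subspace_scale)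
      hence "0 \<le> (u + t *\<^sub>R v) \<bullet> g (u + t *\<^sub>R v)" by (rule Qpos)
      also have "\<dots> = u \<bullet> g u + t * (v \<bullet> g u) + t * (u \<bullet> g v) + t^2 * (v \<bullet> g v)"
        by (simp add: glin inner_add_left inner_add_right power2_eq_square algebra_simps)
      also have "u \<bullet> g v = v \<bullet> g u" using gsym[of u v] by (simp add: inner_commute)
      finally show "0 \<le> 2*t*(v \<bullet> g u) + t^2*(v \<bullet> g v)" using Qu by simp
    qed
    hence "g u \<bullet> g u = 0" using gS[OF uS] by blast
    hence "g u = 0" by simp
    hence eig: "A *v u = \<mu> *\<^sub>R u" by (simp add: g_def)
    define S' where "S' = {x \<in> S. u \<bullet> x = 0}"
    have sub': "subspace S'" unfolding S'_def using less.prems(1)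
      by (auto simp: subspace_def inner_add_right)
    have inv': "\<forall>x\<in>S'. A *v x \<in> S'"
    proof
      fix x assume "x \<in> S'"
      thus "A *v x \<in> S'" using less.prems(2) symI[of u x] eig
        by (auto simp: S'_def)
    qed
    have "u \<notin> S'" using uu by (simp add: S'_def)
    moreover have "S' \<subseteq> S" by (auto simp: S'_def)
    ultimately have "S' \<subset> S" using uS by blast
    hence "dim S' < dim S" using dim_psubset[of S' S] sub' less.prems(1) by (metis span_eq_iff)
    then obtain B' where B': "B' \<subseteq> S'" "pairwise orthogonal B'" "\<forall>b\<in>B'. norm b = 1"
      "span B' = S'" "\<forall>b\<in>B'. \<exists>l. A *v b = l *\<^sub>R b"
      using less.hyps[OF _ sub' inv'] by blast
    define B where "B = insert u B'"
    have "B \<subseteq> S" using B'(1) uS by (auto simp: B_def S'_def)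
    moreover have "pairwise orthogonal B" unfolding B_def
      using B'(1,2) by (intro pairwise_orthogonal_insert) (auto simp: S'_def orthogonal_def)
    moreover have "\<forall>b\<in>B. norm b = 1" using B'(3) nu by (auto simp: B_def)
    moreover have "span B = S"
    proof
      show "span B \<subseteq> S" using \<open>B \<subseteq> S\<close> less.prems(1) by (simp add: span_minimal)
      show "S \<subseteq> span B"
      proof
        fix x assume x: "x \<in> S"
        have "x - (u \<bullet> x) *\<^sub>R u \<in> S'" using x uS less.prems(1) uu
          by (auto simp: S'_def inner_diff_right intro: subspace_diff subspace_scale)
        hence "x - (u \<bullet> x) *\<^sub>R u \<in> span B" using B'(4) span_mono[of B' B] by (auto simp: B_def)
        moreover have "(u \<bullet> x) *\<^sub>R u \<in> span B" by (simp add: B_def span_base span_mul)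
        ultimately have "(x - (u \<bullet> x) *\<^sub>R u) + (u \<bullet> x) *\<^sub>R u \<in> span B" by (rule span_add)
        thus "x \<in> span B" by simp
      qed
    qed
    moreover have "\<forall>b\<in>B. \<exists>l. A *v b = l *\<^sub>R b" using B'(5) eig by (auto simp: B_def)
    ultimately show ?thesis by blast
  qed
qed

definition onb :: "(real^'n) set \<Rightarrow> bool" where
  "onb B \<longleftrightarrow> pairwise orthogonal B \<and> (\<forall>b\<in>B. norm b = 1) \<and> span B = UNIV"

lemma onb_finite: "onb B \<Longrightarrow> finite B"
  by (simp add: onb_def pairwise_orthogonal_imp_finite)

lemma onb_inner: "onb B \<Longrightarrow> b \<in> B \<Longrightarrow> c \<in> B \<Longrightarrow> b \<bullet> c = (if b = c then 1 else 0)"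
  by (auto simp: onb_def pairwise_def orthogonal_def norm_eq_1)

lemma onb_expand: "onb B \<Longrightarrow> (\<Sum>b\<in>B. (x \<bullet> b) *\<^sub>R b) = x"
  by (rule orthonormal_basis_expand) (auto simp: onb_def onb_finite)

lemma onb_parseval: "onb B \<Longrightarrow> (\<Sum>b\<in>B. (x \<bullet> b)^2) = x \<bullet> x"
proof -
  assume B: "onb B"
  have "x \<bullet> x = x \<bullet> (\<Sum>b\<in>B. (x \<bullet> b) *\<^sub>R b)" using onb_expand[OF B] by simp
  also have "\<dots> = (\<Sum>b\<in>B. (x \<bullet> b)^2)" by (simp add: inner_sum_right power2_eq_square)
  finally show ?thesis by simp
qed

lemma spectral:
  fixes A :: "real^'n^'n"
  assumes "transpose A = A"
  shows "\<exists>B. onb B \<and> (\<forall>b\<in>B. A *v b = (b \<bullet> (A *v b)) *\<^sub>R b)"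
proof -
  have "\<exists>B. B \<subseteq> UNIV \<and> pairwise orthogonal B \<and> (\<forall>b\<in>B. norm b = 1) \<and> span B = UNIV \<and>
        (\<forall>b\<in>B. \<exists>l. A *v b = l *\<^sub>R b)"
    by (rule spectral_sub[OF assms subspace_UNIV]) simp
  then obtain B where B: "pairwise orthogonal B" "\<forall>b\<in>B. norm b = 1" "span B = UNIV"
      "\<forall>b\<in>B. \<exists>l. A *v b = l *\<^sub>R b"
    by (elim exE conjE)
  have "A *v b = (b \<bullet> (A *v b)) *\<^sub>R b" if bB: "b \<in> B" for b
  proof -
    obtain l where l: "A *v b = l *\<^sub>R b" using bspec[OF B(4) bB] by (elim exE)
    have "b \<bullet> b = 1" using B(2) bB by (simp add: norm_eq_1)
    thus ?thesis using l by simp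
  qed
  hence "\<forall>b\<in>B. A *v b = (b \<bullet> (A *v b)) *\<^sub>R b" by blast
  moreover have "onb B" unfolding onb_def using B(1,2,3) by blast
  ultimately show ?thesis by blast
qed

lemma matrix_eq_onb:
  fixes M N :: "real^'n^'m"
  assumes B: "onb B" and eq: "\<And>b. b \<in> B \<Longrightarrow> M *v b = N *v b"
  shows "M = N"
proof -
  have "M *v x = N *v x" for x :: "real^'n"
  proof -
    have "x \<in> span B" using B by (simp add: onb_def)
    thus "M *v x = N *v x"
      using linear_eq_on_span[OF matrix_vector_mul_linear matrix_vector_mul_linear, of B] eq
      by blast
  qed
  thus ?thesis by (subst matrix_eq) blast
qed

lemma trace_onb:
  fixes M :: "real^'n^'n"
  assumes B: "onb B"
  shows "trace M = (\<Sum>b\<in>B. b \<bullet> (M *v b))"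
proof -
  have fin: "finite B" using onb_finite[OF B] .
  have delta: "(\<Sum>b\<in>B. b$i * b$j) = (if i = j then 1 else 0)" for i j
  proof -
    have "(axis j (1::real))$i = (\<Sum>b\<in>B. ((axis j 1) \<bullet> b) *\<^sub>R b)$i"
      using onb_expand[OF B, of "axis j 1"] by simp
    also have "\<dots> = (\<Sum>b\<in>B. b$j * b$i)" by (simp add: inner_axis')
    finally show ?thesis by (simp add: axis_def mult.commute)
  qed
  have "(\<Sum>b\<in>B. b \<bullet> (M *v b)) = (\<Sum>b\<in>B. \<Sum>i\<in>UNIV. \<Sum>j\<in>UNIV. M$i$j * (b$i * b$j))"
    by (simp add: inner_vec_def matrix_vector_mult_def sum_distrib_left mult_ac)
  also have "\<dots> = (\<Sum>i\<in>UNIV. \<Sum>j\<in>UNIV. M$i$j * (\<Sum>b\<in>B. b$i * b$j))"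
  proof -
    have "(\<Sum>b\<in>B. \<Sum>i\<in>UNIV. \<Sum>j\<in>UNIV. M$i$j * (b$i * b$j))
        = (\<Sum>i\<in>UNIV. \<Sum>b\<in>B. \<Sum>j\<in>UNIV. M$i$j * (b$i * b$j))" by (rule sum.swap)
    also have "\<dots> = (\<Sum>i\<in>UNIV. \<Sum>j\<in>UNIV. \<Sum>b\<in>B. M$i$j * (b$i * b$j))"
      by (rule sum.cong[OF refl], rule sum.swap)
    finally show ?thesis by (simp add: sum_distrib_left)
  qed
  also have "\<dots> = (\<Sum>i\<in>UNIV. M$i$i)"
  proof (rule sum.cong[OF refl])
    fix i
    have "(\<Sum>j\<in>UNIV. M$i$j * (\<Sum>b\<in>B. b$i * b$j)) = (\<Sum>j\<in>UNIV. if i = j then M$i$j else 0)"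
      by (rule sum.cong) (auto simp: delta)
    thus "(\<Sum>j\<in>UNIV. M$i$j * (\<Sum>b\<in>B. b$i * b$j)) = M$i$i" by simp
  qed
  finally show ?thesis by (simp add: trace_def)
qed

lemma psd_sqrt_exists:
  fixes A :: "real^'n^'n"
  assumes A: "psd A"
  shows "\<exists>R. psd R \<and> R ** R = A"
proof -
  obtain B where B: "onb B" and eig: "\<And>b. b \<in> B \<Longrightarrow> A *v b = (b \<bullet> (A *v b)) *\<^sub>R b"
    using spectral[of A] A by (auto simp: psd_def)
  have fin: "finite B" using onb_finite[OF B] .
  define s where "s b = sqrt (b \<bullet> (A *v b))" for b
  define R :: "real^'n^'n" where "R = (\<chi> i j. \<Sum>b\<in>B. s b * (b$i * b$j))"
  have Rx: "R *v x = (\<Sum>b\<in>B. (s b * (b \<bullet> x)) *\<^sub>R b)" for x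
  proof -
    have "(R *v x)$i = (\<Sum>b\<in>B. (s b * (b \<bullet> x)) *\<^sub>R b)$i" for i
    proof -
      have "(R *v x)$i = (\<Sum>j\<in>UNIV. \<Sum>b\<in>B. s b * b$i * (b$j * x$j))"
        by (simp add: R_def matrix_vector_mult_def sum_distrib_right sum_distrib_left mult_ac)
      also have "\<dots> = (\<Sum>b\<in>B. \<Sum>j\<in>UNIV. s b * b$i * (b$j * x$j))" by (rule sum.swap)
      also have "\<dots> = (\<Sum>b\<in>B. (s b * (b \<bullet> x)) * b$i)"
        by (simp add: inner_vec_def sum_distrib_left mult_ac)
      finally show ?thesis by (simp add: sum_component)
    qed
    thus ?thesis by (simp add: vec_eq_iff)
  qed
  have Rb: "R *v c = s c *\<^sub>R c" if c: "c \<in> B" for c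
  proof -
    have "R *v c = (\<Sum>b\<in>B. if b = c then s c *\<^sub>R c else 0)"
      unfolding Rx by (intro sum.cong refl) (simp add: onb_inner[OF B _ c])
    also have "\<dots> = s c *\<^sub>R c" using fin c by (simp add: sum.delta')
    finally show ?thesis .
  qed
  have Rs: "R$i$j = R$j$i" for i j unfolding R_def by (simp add: mult.commute)
  have "transpose R = R" unfolding transpose_def vec_eq_iff using Rs by simp
  moreover have "0 \<le> x \<bullet> (R *v x)" for x
  proof -
    have "x \<bullet> (R *v x) = (\<Sum>b\<in>B. s b * (b \<bullet> x)^2)"
      unfolding Rx inner_sum_right by (simp add: power2_eq_square inner_commute mult.assoc)
    also have "\<dots> \<ge> 0" using A by (intro sum_nonneg) (simp add: s_def psd_def)
    finally show ?thesis by simp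
  qed
  ultimately have "psd R" by (simp add: psd_def)
  moreover have "R ** R = A"
  proof (rule matrix_eq_onb[OF B])
    fix b assume b: "b \<in> B"
    have nn: "0 \<le> b \<bullet> (A *v b)" using A by (simp add: psd_def)
    have "(R ** R) *v b = R *v (R *v b)" by (simp add: matrix_vector_mul_assoc)
    also have "\<dots> = (s b * s b) *\<^sub>R b" using Rb[OF b] by (simp add: matrix_vector_mult_scaleR)
    also have "\<dots> = A *v b" using eig[OF b] nn by (simp add: s_def)
    finally show "(R ** R) *v b = A *v b" .
  qed
  ultimately show ?thesis by blast
qed

lemma psd_sqrt_eig:
  fixes R A :: "real^'n^'n"
  assumes R: "psd R" and RR: "R ** R = A" and v: "A *v v = l *\<^sub>R v" and l: "0 \<le> l"
  shows "R *v v = sqrt l *\<^sub>R v"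
proof -
  define s where "s = sqrt l"
  have s: "0 \<le> s" "s * s = l" using l by (auto simp: s_def)
  define w where "w = R *v v - s *\<^sub>R v"
  have RR': "R *v (R *v x) = A *v x" for x using RR by (simp add: matrix_vector_mul_assoc)
  have "R *v w + s *\<^sub>R w = 0"
    using RR'[of v] v s(2)
    by (simp add: w_def matrix_vector_right_distrib matrix_vector_mult_diff_distrib
        matrix_vector_mult_scaleR algebra_simps)
  hence "w \<bullet> (R *v w) + s * (w \<bullet> w) = 0"
    by (metis inner_add_right inner_scaleR_right inner_zero_right)
  moreover have "0 \<le> w \<bullet> (R *v w)" using R by (simp add: psd_def)
  ultimately have h: "s * (w \<bullet> w) = 0" using s(1)
    by (smt (verit) inner_ge_zero mult_nonneg_nonneg)
  show ?thesis
  proof (cases "s = 0")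
    case False
    hence "w = 0" using h by simp
    thus ?thesis by (simp add: w_def s_def)
  next
    case True
    hence "A *v v = 0" using v s by simp
    hence "R *v (R *v v) = 0" using RR' by simp
    hence "(R *v v) \<bullet> (R *v v) = 0"
      using R inner_mat_transpose[of "R *v v" R v] by (simp add: psd_def inner_commute)
    thus ?thesis using True by (simp add: s_def)
  qed
qed

lemma psd_sqrt_unique:
  fixes A :: "real^'n^'n"
  assumes A: "psd A" and R1: "psd R1" "R1 ** R1 = A" and R2: "psd R2" "R2 ** R2 = A"
  shows "R1 = R2"
proof -
  obtain B where B: "onb B" and eig: "\<And>b. b \<in> B \<Longrightarrow> A *v b = (b \<bullet> (A *v b)) *\<^sub>R b"
    using spectral[of A] A by (auto simp: psd_def)
  show ?thesis
  proof (rule matrix_eq_onb[OF B])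
    fix b assume b: "b \<in> B"
    have nn: "0 \<le> b \<bullet> (A *v b)" using A by (simp add: psd_def)
    show "R1 *v b = R2 *v b"
      using psd_sqrt_eig[OF R1 eig[OF b] nn] psd_sqrt_eig[OF R2 eig[OF b] nn] by simp
  qed
qed

lemma msqrt:
  fixes A :: "real^'n^'n"
  assumes A: "psd A"
  shows "psd (msqrt A) \<and> msqrt A ** msqrt A = A"
proof -
  have "\<exists>!R. psd R \<and> R ** R = A"
    using psd_sqrt_exists[OF A] psd_sqrt_unique[OF A] by blast
  thus ?thesis unfolding msqrt_def by (rule theI')
qed

lemma msqrt_eig:
  fixes A :: "real^'n^'n"
  assumes "psd A" "A *v v = l *\<^sub>R v" "0 \<le> l"
  shows "msqrt A *v v = sqrt l *\<^sub>R v"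
  using msqrt[OF assms(1)] psd_sqrt_eig assms by blast

lemma psd_gram: "psd (transpose P ** (P::real^'n^'m))"
  unfolding psd_def
proof
  show "transpose (transpose P ** P) = transpose P ** P" by (simp add: matrix_transpose_mul)
  show "\<forall>x. 0 \<le> x \<bullet> ((transpose P ** P) *v x)"
    by (metis inner_ge_zero inner_mat_transpose matrix_vector_mul_assoc transpose_transpose)
qed

lemma trace_psd_nonneg:
  fixes A :: "real^'n^'n"
  assumes "psd A"
  shows "0 \<le> trace A"
proof -
  have "A$i$i = axis i 1 \<bullet> (A *v axis i 1)" for i
  proof -
    have "(\<Sum>j\<in>UNIV. A$i$j * (if j = i then 1 else 0)) = (\<Sum>j\<in>UNIV. if j = i then A$i$j else 0)" 
      by (rule sum.cong) auto
    hence "(A *v axis i 1)$i = A$i$i" by (simp add: matrix_vector_mult_def axis_def)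
    moreover have "axis i 1 \<bullet> (A *v axis i 1) = (A *v axis i 1)$i" by (simp only: inner_axis') simp
    ultimately show ?thesis by simp
  qed
  thus ?thesis using assms unfolding trace_def psd_def by (metis (no_types, lifting) sum_nonneg)
qed

lemma psd_gram': "psd ((P::real^'n^'m) ** transpose P)"
  using psd_gram[of "transpose P"] by simp

lemma eigbasis_psd:
  fixes A :: "real^'n^'n"
  assumes "psd A"
  obtains B where "onb B" "\<And>b. b \<in> B \<Longrightarrow> A *v b = (b \<bullet> (A *v b)) *\<^sub>R b"
    "\<And>b. b \<in> B \<Longrightarrow> 0 \<le> b \<bullet> (A *v b)"
  using spectral[of A] assms unfolding psd_def by blast

lemma trace_msqrt_onb:
  fixes A :: "real^'n^'n"
  assumes A: "psd A" and B: "onb B" and eig: "\<And>b. b \<in> B \<Longrightarrow> A *v b = (b \<bullet> (A *v b)) *\<^sub>R b"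
    and nn: "\<And>b. b \<in> B \<Longrightarrow> 0 \<le> b \<bullet> (A *v b)"
  shows "trace (msqrt A) = (\<Sum>b\<in>B. sqrt (b \<bullet> (A *v b)))"
proof -
  have "trace (msqrt A) = (\<Sum>b\<in>B. b \<bullet> (msqrt A *v b))" by (rule trace_onb[OF B])
  also have "\<dots> = (\<Sum>b\<in>B. sqrt (b \<bullet> (A *v b)))"
  proof (rule sum.cong[OF refl])
    fix b assume b: "b \<in> B"
    have "b \<bullet> b = 1" using onb_inner[OF B b b] by simp
    thus "b \<bullet> (msqrt A *v b) = sqrt (b \<bullet> (A *v b))"
      using msqrt_eig[OF A eig[OF b] nn[OF b]] by simp
  qed
  finally show ?thesis .
qed

lemma trace_msqrt_swap:
  fixes P :: "real^'k^'m"
  shows "trace (msqrt (P ** transpose P)) = trace (msqrt (transpose P ** P))"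
proof -
  define G1 where "G1 = transpose P ** P"
  define G2 where "G2 = P ** transpose P"
  have p1: "psd G1" unfolding G1_def by (rule psd_gram)
  have p2: "psd G2" unfolding G2_def by (rule psd_gram')
  obtain U where U: "onb U" and eU: "\<And>b. b \<in> U \<Longrightarrow> G1 *v b = (b \<bullet> (G1 *v b)) *\<^sub>R b"
    and nU: "\<And>b. b \<in> U \<Longrightarrow> 0 \<le> b \<bullet> (G1 *v b)" using eigbasis_psd[OF p1] by blast
  obtain W where W: "onb W" and eW: "\<And>b. b \<in> W \<Longrightarrow> G2 *v b = (b \<bullet> (G2 *v b)) *\<^sub>R b"
    and nW: "\<And>b. b \<in> W \<Longrightarrow> 0 \<le> b \<bullet> (G2 *v b)" using eigbasis_psd[OF p2] by blast
  have fU: "finite U" and fW: "finite W" using U W by (auto intro: onb_finite)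
  define lam where "lam u = u \<bullet> (G1 *v u)" for u
  define mu where "mu w = w \<bullet> (G2 *v w)" for w
  define c where "c w u = w \<bullet> (P *v u)" for w u
  define h :: "real \<Rightarrow> real" where "h t = (if t > 0 then 1 / sqrt t else 0)" for t
  have h: "t * h t = sqrt t" if "0 \<le> t" for t
    using that by (auto simp: h_def field_simps real_sqrt_mult[symmetric] less_le)
  have a: "(\<Sum>w\<in>W. (c w u)^2) = lam u" for u
  proof -
    have "(\<Sum>w\<in>W. (c w u)^2) = (P *v u) \<bullet> (P *v u)"
      using onb_parseval[OF W, of "P *v u"] by (simp add: c_def inner_commute)
    also have "\<dots> = lam u" unfolding lam_def G1_def
      by (simp add: inner_mat_transpose[of "P *v u" P u] inner_commute matrix_vector_mul_assoc)
    finally show ?thesis .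
  qed
  have b: "(\<Sum>u\<in>U. (c w u)^2) = mu w" for w
  proof -
    have cw: "c w u = (transpose P *v w) \<bullet> u" for u by (simp add: c_def inner_mat_transpose)
    have "(\<Sum>u\<in>U. (c w u)^2) = (transpose P *v w) \<bullet> (transpose P *v w)"
      using onb_parseval[OF U, of "transpose P *v w"] by (simp add: cw)
    also have "\<dots> = mu w" unfolding mu_def G2_def matrix_vector_mul_assoc[symmetric]
      by (rule inner_mat_transpose[symmetric])
    finally show ?thesis .
  qed
  have G2sym: "transpose G2 = G2" using p2 by (simp add: psd_def)
  have ceq: "lam u = mu w" if "u \<in> U" "w \<in> W" "c w u \<noteq> 0" for u w
  proof -
    have "G2 *v (P *v u) = P *v (G1 *v u)" by (simp add: G1_def G2_def matrix_vector_mul_assoc matrix_mul_assoc)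
    also have "\<dots> = lam u *\<^sub>R (P *v u)"
    proof -
      have "G1 *v u = lam u *\<^sub>R u" using eU[OF that(1)] unfolding lam_def .
      thus ?thesis by (simp add: matrix_vector_mult_scaleR)
    qed
    finally have e1: "G2 *v (P *v u) = lam u *\<^sub>R (P *v u)" .
    have "lam u * c w u = w \<bullet> (G2 *v (P *v u))" by (simp add: e1 c_def)
    also have "\<dots> = (G2 *v w) \<bullet> (P *v u)" by (simp add: inner_mat_transpose G2sym)
    also have "\<dots> = mu w * c w u"
    proof -
      have "G2 *v w = mu w *\<^sub>R w" using eW[OF that(2)] unfolding mu_def .
      thus ?thesis by (simp add: c_def)
    qed
    finally show ?thesis using that(3) by simp
  qed
  have "trace (msqrt G1) = (\<Sum>u\<in>U. sqrt (lam u))"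
    unfolding lam_def by (rule trace_msqrt_onb[OF p1 U eU nU])
  also have "\<dots> = (\<Sum>u\<in>U. lam u * h (lam u))" using nU by (simp add: h lam_def)
  also have "\<dots> = (\<Sum>u\<in>U. \<Sum>w\<in>W. (c w u)^2 * h (lam u))" by (simp add: a[symmetric] sum_distrib_right)
  also have "\<dots> = (\<Sum>u\<in>U. \<Sum>w\<in>W. (c w u)^2 * h (mu w))"
    by (intro sum.cong refl) (metis ceq mult_eq_0_iff power_zero_numeral zero_less_numeral power_eq_0_iff)
  also have "\<dots> = (\<Sum>w\<in>W. \<Sum>u\<in>U. (c w u)^2 * h (mu w))" by (rule sum.swap)
  also have "\<dots> = (\<Sum>w\<in>W. mu w * h (mu w))" by (simp add: b[symmetric] sum_distrib_right)
  also have "\<dots> = (\<Sum>w\<in>W. sqrt (mu w))" using nW by (simp add: h mu_def)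
  also have "\<dots> = trace (msqrt G2)"
    unfolding mu_def by (rule trace_msqrt_onb[OF p2 W eW nW, symmetric])
  finally show ?thesis by (simp add: G1_def G2_def)
qed

lemma bessel:
  fixes v :: "'i \<Rightarrow> real^'n"
  assumes fin: "finite I" and orth: "\<And>i j. i \<in> I \<Longrightarrow> j \<in> I \<Longrightarrow> i \<noteq> j \<Longrightarrow> v i \<bullet> v j = 0"
    and le1: "\<And>i. i \<in> I \<Longrightarrow> v i \<bullet> v i \<le> 1"
  shows "(\<Sum>i\<in>I. (x \<bullet> v i)^2) \<le> x \<bullet> x"
proof -
  define p where "p = (\<Sum>i\<in>I. (x \<bullet> v i) *\<^sub>R v i)"
  define S where "S = (\<Sum>i\<in>I. (x \<bullet> v i)^2)"
  have xp: "x \<bullet> p = S" by (simp add: p_def S_def inner_sum_right power2_eq_square)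
  have pp: "p \<bullet> p = (\<Sum>i\<in>I. (x \<bullet> v i)^2 * (v i \<bullet> v i))"
  proof -
    have "p \<bullet> p = (\<Sum>i\<in>I. \<Sum>j\<in>I. (x \<bullet> v i) * (x \<bullet> v j) * (v j \<bullet> v i))"
      by (simp add: p_def inner_sum_left inner_sum_right sum_distrib_left mult_ac)
    also have "\<dots> = (\<Sum>i\<in>I. \<Sum>j\<in>I. if j = i then (x \<bullet> v i)^2 * (v i \<bullet> v i) else 0)"
      by (intro sum.cong refl) (auto simp: orth power2_eq_square)
    also have "\<dots> = (\<Sum>i\<in>I. (x \<bullet> v i)^2 * (v i \<bullet> v i))" using fin by simp
    finally show ?thesis .
  qed
  have "p \<bullet> p \<le> S" unfolding pp S_def
    by (intro sum_mono) (simp add: le1 mult_left_le)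
  moreover have "0 \<le> (x - p) \<bullet> (x - p)" by simp
  moreover have "(x - p) \<bullet> (x - p) = x \<bullet> x - 2 * (x \<bullet> p) + p \<bullet> p"
    by (simp add: inner_diff_left inner_diff_right inner_commute)
  ultimately show ?thesis using xp S_def by linarith
qed

lemma onb_exists: "\<exists>E::(real^'n) set. onb E"
  using spectral[of "mat 1 :: real^'n^'n"] by auto

lemma nuclear_nonneg: "0 \<le> nuclear_norm (M::real^'n^'m)"
  unfolding nuclear_norm_def using msqrt[OF psd_gram[of M]] trace_psd_nonneg by blast

lemma nuclear_bound:
  fixes A :: "real^'a^'m" and B :: "real^'b^'m"
  shows "nuclear_norm (transpose A ** B) \<le> sqrt (trace (transpose A ** A) * trace (transpose B ** B))"
proof -
  define M where "M = transpose A ** B"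
  define G where "G = transpose M ** M"
  have pG: "psd G" unfolding G_def by (rule psd_gram)
  obtain U where U: "onb U" and eU: "\<And>b. b \<in> U \<Longrightarrow> G *v b = (b \<bullet> (G *v b)) *\<^sub>R b"
    and nU: "\<And>b. b \<in> U \<Longrightarrow> 0 \<le> b \<bullet> (G *v b)" using eigbasis_psd[OF pG] by blast
  have fU: "finite U" using onb_finite[OF U] .
  have Gx: "x \<bullet> (G *v y) = (M *v x) \<bullet> (M *v y)" for x y
    unfolding G_def matrix_vector_mul_assoc[symmetric] by (metis inner_mat_transpose transpose_transpose)
  define v where "v u = (M *v u) /\<^sub>R norm (M *v u)" for u
  define a where "a u = norm (A *v v u)" for u
  have nuc: "nuclear_norm M = (\<Sum>u\<in>U. norm (M *v u))"
  proof -
    have "nuclear_norm M = (\<Sum>u\<in>U. sqrt (u \<bullet> (G *v u)))"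
      unfolding nuclear_norm_def G_def[symmetric] by (rule trace_msqrt_onb[OF pG U eU nU])
    also have "\<dots> = (\<Sum>u\<in>U. norm (M *v u))" by (simp add: Gx norm_eq_sqrt_inner)
    finally show ?thesis .
  qed
  have step: "norm (M *v u) \<le> a u * norm (B *v u)" for u
  proof (cases "M *v u = 0")
    case True thus ?thesis by (simp add: a_def)
  next
    case False
    have "norm (M *v u) = v u \<bullet> (M *v u)"
      using False by (simp add: v_def power2_norm_eq_inner[symmetric] power2_eq_square)
    also have "\<dots> = (A *v v u) \<bullet> (B *v u)"
      unfolding M_def matrix_vector_mul_assoc[symmetric] inner_mat_transpose by simp
    also have "\<dots> \<le> a u * norm (B *v u)" unfolding a_def by (rule norm_cauchy_schwarz)
    finally show ?thesis .
  qed
  have sumB: "(\<Sum>u\<in>U. (norm (B *v u))^2) = trace (transpose B ** B)"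
  proof -
    have "(\<Sum>u\<in>U. (norm (B *v u))^2) = (\<Sum>u\<in>U. u \<bullet> ((transpose B ** B) *v u))"
    proof (intro sum.cong refl)
      fix u
      have "u \<bullet> ((transpose B ** B) *v u) = (B *v u) \<bullet> (B *v u)"
        unfolding matrix_vector_mul_assoc[symmetric] by (metis inner_mat_transpose transpose_transpose)
      thus "(norm (B *v u))^2 = u \<bullet> ((transpose B ** B) *v u)" by (simp add: power2_norm_eq_inner)
    qed
    also have "\<dots> = trace (transpose B ** B)" by (rule trace_onb[OF U, symmetric])
    finally show ?thesis .
  qed
  obtain E :: "(real^'m) set" where E: "onb E" using onb_exists by blast
  have fE: "finite E" using onb_finite[OF E] .
  have vorth: "v i \<bullet> v j = 0" if "i \<in> U" "j \<in> U" "i \<noteq> j" for i j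
  proof -
    have "(M *v i) \<bullet> (M *v j) = i \<bullet> (G *v j)" by (simp add: Gx)
    also have "\<dots> = (j \<bullet> (G *v j)) * (i \<bullet> j)" using eU[OF that(2)] by (metis inner_scaleR_right)
    also have "\<dots> = 0" using onb_inner[OF U that(1,2)] that(3) by simp
    finally show ?thesis by (simp add: v_def)
  qed
  have vle: "v i \<bullet> v i \<le> 1" for i
  proof (cases "M *v i = 0")
    case True thus ?thesis by (simp add: v_def)
  next
    case False thus ?thesis
      by (simp add: v_def power2_norm_eq_inner[symmetric] power2_eq_square)
  qed
  have sumA: "(\<Sum>u\<in>U. (a u)^2) \<le> trace (transpose A ** A)"
  proof -
    have "(\<Sum>u\<in>U. (a u)^2) = (\<Sum>u\<in>U. \<Sum>e\<in>E. ((transpose A *v e) \<bullet> v u)^2)"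
    proof (intro sum.cong refl)
      fix u
      have "(a u)^2 = (\<Sum>e\<in>E. ((A *v v u) \<bullet> e)^2)"
        using onb_parseval[OF E, of "A *v v u"] by (simp add: a_def power2_norm_eq_inner)
      also have "\<dots> = (\<Sum>e\<in>E. ((transpose A *v e) \<bullet> v u)^2)"
        by (intro sum.cong refl) (metis inner_commute inner_mat_transpose)
      finally show "(a u)^2 = (\<Sum>e\<in>E. ((transpose A *v e) \<bullet> v u)^2)" .
    qed
    also have "\<dots> = (\<Sum>e\<in>E. \<Sum>u\<in>U. ((transpose A *v e) \<bullet> v u)^2)" by (rule sum.swap)
    also have "\<dots> \<le> (\<Sum>e\<in>E. (transpose A *v e) \<bullet> (transpose A *v e))"
      by (intro sum_mono bessel[OF fU]) (auto simp: vorth vle)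
    also have "\<dots> = (\<Sum>e\<in>E. e \<bullet> ((A ** transpose A) *v e))"
    proof (intro sum.cong refl)
      fix e :: "real^'m"
      show "(transpose A *v e) \<bullet> (transpose A *v e) = e \<bullet> ((A ** transpose A) *v e)"
        unfolding matrix_vector_mul_assoc[symmetric] by (metis inner_mat_transpose)
    qed
    also have "\<dots> = trace (A ** transpose A)" by (rule trace_onb[OF E, symmetric])
    also have "\<dots> = trace (transpose A ** A)" by (rule trace_mul_sym)
    finally show ?thesis .
  qed
  have "nuclear_norm M \<le> (\<Sum>u\<in>U. a u * norm (B *v u))" unfolding nuc by (intro sum_mono step)
  also have "\<dots> \<le> sqrt ((\<Sum>u\<in>U. (a u)^2) * (\<Sum>u\<in>U. (norm (B *v u))^2))"
    using Cauchy_Schwarz_ineq_sum[of a "\<lambda>u. norm (B *v u)" U] real_le_rsqrt by blast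
  also have "\<dots> \<le> sqrt (trace (transpose A ** A) * trace (transpose B ** B))"
    unfolding sumB
    by (intro real_sqrt_le_mono mult_right_mono sumA)
       (metis sumB sum_nonneg zero_le_power2)
  finally show ?thesis by (simp add: M_def)
qed

lemma centering_sym: "transpose (centering::real^'m^'m) = centering"
  by (auto simp: centering_def transpose_def vec_eq_iff)

lemma centering_idem: "centering ** centering = (centering::real^'m^'m)"
proof -
  define c :: real where "c = 1 / real CARD('m)"
  have cM: "real CARD('m) * c * c = c" by (simp add: c_def)
  have "(\<Sum>k\<in>UNIV. ((if i = k then 1 else 0) - c) * ((if k = j then 1 else 0) - c))
      = (if i = j then 1 else 0) - c" for i j :: 'm
  proof -
    have "(\<Sum>k\<in>UNIV. ((if i = k then 1 else 0) - c) * ((if k = j then 1 else 0) - c))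
      = (\<Sum>k\<in>UNIV. (if k = i then (if i = j then 1 else 0) else 0) - (if i = k then c else 0)
            - (if k = j then c else 0) + c * c)"
      by (intro sum.cong refl) (auto simp: algebra_simps)
    also have "\<dots> = (if i = j then 1 else 0) - c - c + real CARD('m) * c * c"
      by (simp add: sum.distrib sum_subtractf)
    finally show ?thesis using cM by simp
  qed
  thus ?thesis by (simp add: vec_eq_iff matrix_matrix_mult_def centering_def c_def)
qed

lemma centering_idem': "Z ** centering ** centering = (Z::real^'m^'n) ** centering"
  by (simp add: matrix_mul_assoc[symmetric] centering_idem)

theorem theorem1:
  fixes X :: "real^'nx^'m" and Y :: "real^'ny^'m"
  defines "KX \<equiv> centering ** X ** transpose X ** centering"
      and "KY \<equiv> centering ** Y ** transpose Y ** centering"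
  shows "bures KX KY = procrustes X Y \<and>
         (centering ** X \<noteq> 0 \<and> centering ** Y \<noteq> 0 \<longrightarrow> NBS KX KY = cos (shape_dist X Y))"
proof -
  define A where "A = (centering::real^'m^'m) ** X"
  define B where "B = (centering::real^'m^'m) ** Y"
  have KXA: "KX = A ** transpose A"
    by (simp add: KX_def A_def matrix_transpose_mul centering_sym matrix_mul_assoc)
  have KYB: "KY = B ** transpose B"
    by (simp add: KY_def B_def matrix_transpose_mul centering_sym matrix_mul_assoc)
  have trX: "trace KX = trace (SigmaX X)"
  proof -
    have "trace KX = trace (transpose A ** A)" unfolding KXA by (rule trace_mul_sym)
    also have "transpose A ** A = SigmaX X"
      by (simp add: A_def SigmaX_def matrix_transpose_mul centering_sym matrix_mul_assoc centering_idem')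
    finally show ?thesis .
  qed
  have trY: "trace KY = trace (SigmaX Y)"
  proof -
    have "trace KY = trace (transpose B ** B)" unfolding KYB by (rule trace_mul_sym)
    also have "transpose B ** B = SigmaX Y"
      by (simp add: B_def SigmaX_def matrix_transpose_mul centering_sym matrix_mul_assoc centering_idem')
    finally show ?thesis .
  qed
  have SXY: "SigmaXY X Y = transpose A ** B"
    by (simp add: A_def B_def SigmaXY_def matrix_transpose_mul centering_sym matrix_mul_assoc centering_idem')
  have trSX: "trace (SigmaX X) = trace (transpose A ** A)" using trX KXA trace_mul_sym by metis
  have trSY: "trace (SigmaX Y) = trace (transpose B ** B)" using trY KYB trace_mul_sym by metis
  have pK: "psd KX" unfolding KXA by (rule psd_gram')
  define R where "R = msqrt KX"
  have R: "psd R" "R ** R = KX" using msqrt[OF pK] by (auto simp: R_def)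
  have Rs: "transpose R = R" using R(1) by (simp add: psd_def)
  have RRZ: "Z ** R ** R = Z ** A ** transpose A" for Z :: "real^'m^'ny"
    by (simp add: matrix_mul_assoc[symmetric] R(2) KXA)
  define P where "P = R ** B"
  have fid: "fidelity KX KY = nuclear_norm (SigmaXY X Y)"
  proof -
    have "msqrt KX ** KY ** msqrt KX = P ** transpose P"
      by (simp add: R_def[symmetric] P_def KYB matrix_transpose_mul Rs matrix_mul_assoc)
    hence "fidelity KX KY = trace (msqrt (P ** transpose P))" by (simp add: fidelity_def)
    also have "\<dots> = trace (msqrt (transpose P ** P))" by (rule trace_msqrt_swap)
    also have "transpose P ** P = transpose (transpose A ** B) ** (transpose A ** B)"
      by (simp add: P_def matrix_transpose_mul Rs matrix_mul_assoc RRZ)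
    finally show ?thesis by (simp add: nuclear_norm_def SXY)
  qed
  have part1: "bures KX KY = procrustes X Y"
    by (simp add: bures_def procrustes_def trX trY fid)
  define z where "z = nuclear_norm (SigmaXY X Y) / sqrt (trace (SigmaX X) * trace (SigmaX Y))"
  have z0: "0 \<le> z" unfolding z_def by (intro divide_nonneg_nonneg nuclear_nonneg real_sqrt_ge_zero ) (simp add: trSX trSY trace_psd_nonneg psd_gram)
  have z1: "z \<le> 1"
  proof -
    have le: "nuclear_norm (SigmaXY X Y) \<le> sqrt (trace (SigmaX X) * trace (SigmaX Y))"
      unfolding SXY trSX trSY by (rule nuclear_bound)
    show ?thesis
    proof (cases "sqrt (trace (SigmaX X) * trace (SigmaX Y)) = 0")
      case True
      have "z = nuclear_norm (SigmaXY X Y) / 0" unfolding z_def by (subst True[symmetric]) (rule refl)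
      thus ?thesis by simp
    next
      case False
      hence "0 < sqrt (trace (SigmaX X) * trace (SigmaX Y))" using le nuclear_nonneg
        by (metis order_le_less order_trans)
      thus ?thesis using le by (simp add: z_def divide_le_eq_1)
    qed
  qed
  have "NBS KX KY = cos (shape_dist X Y)"
  proof -
    have "NBS KX KY = z" by (simp add: NBS_def z_def trX trY fid)
    also have "\<dots> = cos (arccos z)" using z0 z1 by (simp add: cos_arccos)
    finally show ?thesis by (simp add: shape_dist_def z_def)
  qed
  thus ?thesis using part1 by blast
qed

end
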